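(* Let $n\ge2$ and $A\in s(n)$. If there exists $i\in\{1,\dots,n\}$ such that all entries of the $i$-th column $Ae_i$ are strictly positive, then $A$ is divisible in $s(n)$.
   Context: $s(n)$ denotes the set of $n\times n$ column-stochastic matrices (non-negative real entries, each column summing to $1$), a monoid under matrix multiplication whose group of units is the set of permutation matrices. $A\in s(n)$ is indivisible if for every decomposition $A=BC$ with $B,C\in s(n)$ exactly one of $B,C$ is a permutation matrix, and divisible otherwise. $e_i$ is the $i$-th standard basis vector. *)

theory Defs
  imports "HOL-Analysis.Analysis"
begin

text \<open>Matrices over index type 'n (n = CARD('n)); entry A $ i $ j is row i, column j.\<close>

definition col_stochastic :: "real^'n^'n \<Rightarrow> bool" where
  "col_stochastic A \<longleftrightarrow> (\<forall>i j. 0 \<le> A $ i $ j) \<and> (\<forall>j. (\<Sum>i\<in>UNIV. A $ i $ j) = 1)"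

definition perm_matrix :: "real^'n^'n \<Rightarrow> bool" where
  "perm_matrix P \<longleftrightarrow> (\<exists>p. p permutes (UNIV :: 'n set) \<and>
      P = (\<chi> i j. if i = p j then 1 else 0))"

definition indivisible :: "real^'n^'n \<Rightarrow> bool" where
  "indivisible A \<longleftrightarrow> (\<forall>B C. col_stochastic B \<longrightarrow> col_stochastic C \<longrightarrow> A = B ** C \<longrightarrow>
      (perm_matrix B \<noteq> perm_matrix C))"

definition divisible_st :: "real^'n^'n \<Rightarrow> bool" where
  "divisible_st A \<longleftrightarrow> \<not> indivisible A"

end

theory Submission
  imports Defs
begin

lemma two_distinct:
  assumes "CARD('n::finite) \<ge> 2"
  shows "\<exists>i::'n. i \<noteq> x"
proof (rule ccontr)
  assume "\<not> ?thesis"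
  hence "(UNIV::'n set) = {x}" by auto
  thus False using assms by (metis card.empty card.insert empty_iff finite.intros(1) numeral_le_one_iff semiring_norm(69) One_nat_def)
qed

lemma entry_le1:
  assumes "col_stochastic (A::real^'n^'n)"
  shows "A $ i $ k \<le> 1"
proof -
  have "A $ i $ k \<le> (\<Sum>r\<in>UNIV. A $ r $ k)"
    by (rule member_le_sum) (use assms in \<open>auto simp: col_stochastic_def\<close>)
  thus ?thesis using assms by (simp add: col_stochastic_def)
qed

theorem corollary1:
  fixes A :: "real^'n^'n"
  assumes "CARD('n) \<ge> 2"
    and "col_stochastic A"
    and "\<exists>j. \<forall>i. 0 < A $ i $ j"
  shows "divisible_st A"
proof -
  obtain j where pos: "\<And>i. 0 < A $ i $ j" using assms(3) by blast
  obtain l where lj: "l \<noteq> j" using two_distinct[OF assms(1)] by blast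
  define m where "m = Min (range (\<lambda>i. A $ i $ j))"
  have mpos: "m > 0" unfolding m_def using pos by (subst Min_gr_iff) auto
  have mle: "\<And>i. m \<le> A $ i $ j" unfolding m_def by simp
  define s where "s = m / 2"
  define t where "t = 1 - s"
  have m1: "m \<le> 1" using mle[of j] entry_le1[OF assms(2)] by (meson order_trans)
  have spos: "s > 0" and sle: "s \<le> 1/2" using mpos m1 by (auto simp: s_def)
  have tpos: "t > 0" and st: "s + t = 1" using sle by (auto simp: t_def)
  have keyB: "\<And>i. s * A $ i $ l < A $ i $ j"
  proof -
    fix i
    have "s * A $ i $ l \<le> s" using entry_le1[OF assms(2)] spos by (simp add: mult_left_le)
    also have "\<dots> < m" using mpos by (simp add: s_def)
    also have "\<dots> \<le> A $ i $ j" by (rule mle)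
    finally show "s * A $ i $ l < A $ i $ j" .
  qed
  define C :: "real^'n^'n" where "C = (\<chi> i k. if k = j then (if i = j then t else if i = l then s else 0) else (if i = k then 1 else 0))"
  define B :: "real^'n^'n" where "B = (\<chi> i k. if k = j then (A$i$j - s*A$i$l)/t else A$i$k)"
  have Bpos: "\<And>i. B $ i $ j > 0" unfolding B_def using keyB tpos by simp
  have AS: "\<And>i k. 0 \<le> A $ i $ k" "\<And>k. (\<Sum>i\<in>UNIV. A $ i $ k) = 1" using assms(2) by (auto simp: col_stochastic_def)
  have cB: "col_stochastic B"
    unfolding col_stochastic_def
  proof (intro conjI allI)
    fix i k show "0 \<le> B $ i $ k" using Bpos AS by (cases "k = j") (auto simp: B_def less_imp_le)
  next
    fix k
    show "(\<Sum>i\<in>UNIV. B $ i $ k) = 1"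
    proof (cases "k = j")
      case True
      have "(\<Sum>i\<in>UNIV. B $ i $ k) = (\<Sum>i\<in>UNIV. A$i$j - s*A$i$l) / t"
        using True by (simp add: B_def sum_divide_distrib)
      also have "\<dots> = (1 - s) / t" by (simp add: sum_subtractf sum_distrib_left[symmetric] AS)
      finally show ?thesis using tpos by (simp add: t_def)
    qed (simp add: B_def AS)
  qed
  have cC: "col_stochastic C"
    unfolding col_stochastic_def
  proof (intro conjI allI)
    fix i k show "0 \<le> C $ i $ k" using spos tpos by (auto simp: C_def)
  next
    fix k
    show "(\<Sum>i\<in>UNIV. C $ i $ k) = 1"
    proof (cases "k = j")
      case True
      have "(\<Sum>i\<in>UNIV. C $ i $ k) = (\<Sum>i\<in>UNIV. (if i = j then t else 0) + (if i = l then s else 0))"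
        using True lj by (intro sum.cong) (auto simp: C_def)
      also have "\<dots> = 1" using st by (simp add: sum.distrib)
      finally show ?thesis .
    qed (simp add: C_def)
  qed
  have prod: "A = B ** C"
  proof -
    have "A $ i $ k = (B ** C) $ i $ k" for i k
    proof (cases "k = j")
      case True
      have "(B ** C) $ i $ k = (\<Sum>r\<in>UNIV. (if r = j then B$i$j * t else 0) + (if r = l then B$i$l * s else 0))"
        using True lj unfolding matrix_matrix_mult_def by (simp, intro sum.cong) (auto simp: C_def)
      also have "\<dots> = B$i$j * t + B$i$l * s" by (simp add: sum.distrib)
      also have "\<dots> = A $ i $ j" using tpos lj by (simp add: B_def)
      finally show ?thesis using True by simp
    next
      case False
      have "(B ** C) $ i $ k = (\<Sum>r\<in>UNIV. if r = k then B$i$k else 0)"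
        unfolding matrix_matrix_mult_def vec_lambda_beta using False by (intro sum.cong) (auto simp: C_def)
      also have "\<dots> = A $ i $ k" using False by (simp add: B_def)
      finally show ?thesis by simp
    qed
    thus ?thesis by (simp add: vec_eq_iff)
  qed
  have nB: "\<not> perm_matrix B"
  proof
    assume "perm_matrix B"
    then obtain p where "B = (\<chi> i j. if i = p j then 1 else 0)" unfolding perm_matrix_def by blast
    moreover obtain i where "i \<noteq> p j" using two_distinct[OF assms(1)] by blast
    ultimately have "B $ i $ j = 0" by simp
    thus False using Bpos[of i] by simp
  qed
  have nC: "\<not> perm_matrix C"
  proof
    assume "perm_matrix C"
    then obtain p where "C = (\<chi> i j. if i = p j then 1 else 0)" unfolding perm_matrix_def by blast
    hence "C $ j $ j = 0 \<or> C $ j $ j = 1" by simp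
    moreover have "C $ j $ j = t" by (simp add: C_def)
    ultimately show False using tpos spos st by auto
  qed
  show ?thesis unfolding divisible_st_def indivisible_def
    using cB cC prod nB nC by blast
qed

end
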